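(* Let $\lambda(\varepsilon)$ be the real root of $\det\Delta_\varepsilon(z)=0$ defined for small $\varepsilon>0$ with $\lambda(\varepsilon)\to\lambda_0$ as $\varepsilon\to0^+$. For $\delta>0$ sufficiently small and any $\delta_1>0$, there exists $\varepsilon_0>0$ such that for $0<\varepsilon<\varepsilon_0$, $\lambda(\varepsilon)$ is the only root of $\det\Delta_\varepsilon(z)=0$ in the strip $\lambda_0-\delta\le\Re z\le\lambda_0+\delta_1$.
   Context: $L:C([-\tau,0];\mathbb{R}^N)\to\mathbb{R}^N$ is a bounded linear operator; $L(e^{z\cdot}I)$ denotes the complex $N\times N$ matrix whose $j$-th column is $L$ (extended complex-linearly) applied to $\theta\mapsto e^{z\theta}e_j$. Let $\Delta_\varepsilon(z)=\varepsilon^2z^2I-zI+L(e^{z\cdot}I)$ (so $\Delta_0(z)=L(e^{z\cdot}I)-zI$). Assume $\lambda_0>0$ is a real simple zero of $\det\Delta_0$ that is dominant ($\Re z<\lambda_0$ for all other zeros $z$ of $\det\Delta_0$). By the implicit function theorem, for small $\varepsilon>0$ there is a simple real zero $\lambda(\varepsilon)$ of $\det\Delta_\varepsilon$ with $\lambda(\varepsilon)\to\lambda_0$. *)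

theory Defs
  imports "HOL-Analysis.Analysis"
begin

text \<open>Elements of C([-tau,0];R^N) are represented as functions real => real^'n that are
  continuous on {-tau..0}; only their values on {-tau..0} matter.\<close>

definition bounded_linear_delay ::
  "real \<Rightarrow> ((real \<Rightarrow> real^'n) \<Rightarrow> real^'n) \<Rightarrow> bool" where
  "bounded_linear_delay \<tau> L \<longleftrightarrow>
     (\<forall>\<phi> \<psi>. (\<forall>\<theta>\<in>{-\<tau>..0}. \<phi> \<theta> = \<psi> \<theta>) \<longrightarrow> L \<phi> = L \<psi>) \<and>
     (\<forall>\<phi> \<psi>. continuous_on {-\<tau>..0} \<phi> \<and> continuous_on {-\<tau>..0} \<psi> \<longrightarrow>
        L (\<lambda>\<theta>. \<phi> \<theta> + \<psi> \<theta>) = L \<phi> + L \<psi>) \<and>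
     (\<forall>c \<phi>. continuous_on {-\<tau>..0} \<phi> \<longrightarrow> L (\<lambda>\<theta>. c *\<^sub>R \<phi> \<theta>) = c *\<^sub>R L \<phi>) \<and>
     (\<exists>K. \<forall>\<phi>. continuous_on {-\<tau>..0} \<phi> \<longrightarrow>
        norm (L \<phi>) \<le> K * (SUP \<theta>\<in>{-\<tau>..0}. norm (\<phi> \<theta>)))"

text \<open>Complex-linear extension: L(phi) = L(Re phi) + i L(Im phi).\<close>
definition cext :: "((real \<Rightarrow> real^'n) \<Rightarrow> real^'n) \<Rightarrow> (real \<Rightarrow> complex^'n) \<Rightarrow> complex^'n" where
  "cext L \<phi> = (\<chi> i. Complex (L (\<lambda>\<theta>. \<chi> k. Re (\<phi> \<theta> $ k)) $ i)
                               (L (\<lambda>\<theta>. \<chi> k. Im (\<phi> \<theta> $ k)) $ i))"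

text \<open>L(e^{z.} I): the j-th column is L applied to theta |-> e^{z theta} e_j.\<close>
definition Lexp :: "((real \<Rightarrow> real^'n) \<Rightarrow> real^'n) \<Rightarrow> complex \<Rightarrow> complex^'n^'n" where
  "Lexp L z = (\<chi> i j. cext L (\<lambda>\<theta>. axis j (exp (z * of_real \<theta>))) $ i)"

definition Delta :: "((real \<Rightarrow> real^'n) \<Rightarrow> real^'n) \<Rightarrow> real \<Rightarrow> complex \<Rightarrow> complex^'n^'n" where
  "Delta L \<epsilon> z = mat (of_real (\<epsilon>^2) * z^2 - z) + Lexp L z"

end

theory Submission
  imports Defs
begin


lemma L_bound:
  assumes L: "bounded_linear_delay \<tau> L" and tau: "\<tau> > 0"
  shows "\<exists>K\<ge>0. \<forall>\<phi> M. continuous_on {-\<tau>..0} \<phi> \<longrightarrow> (\<forall>\<theta>\<in>{-\<tau>..0}. norm (\<phi> \<theta>) \<le> M)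
          \<longrightarrow> norm (L \<phi>) \<le> K * M"
proof -
  obtain K0 where K0: "\<And>\<phi>. continuous_on {-\<tau>..0} \<phi> \<Longrightarrow>
        norm (L \<phi>) \<le> K0 * (SUP \<theta>\<in>{-\<tau>..0}. norm (\<phi> \<theta>))"
    using L unfolding bounded_linear_delay_def by blast
  have "norm (L \<phi>) \<le> max K0 0 * M" if c: "continuous_on {-\<tau>..0} \<phi>"
     and b: "\<forall>\<theta>\<in>{-\<tau>..0}. norm (\<phi> \<theta>) \<le> M" for \<phi> M
  proof -
    let ?S = "SUP \<theta>\<in>{-\<tau>..0}. norm (\<phi> \<theta>)"
    have ne: "{-\<tau>..0} \<noteq> {}" using tau by simp
    have bdd: "bdd_above ((\<lambda>\<theta>. norm (\<phi> \<theta>)) ` {-\<tau>..0})" using b by (auto intro: bdd_aboveI2)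
    have "?S \<le> M" using ne b by (intro cSUP_least) auto
    moreover have "norm (\<phi> 0) \<le> ?S" using tau bdd by (intro cSUP_upper) auto
    then have "0 \<le> ?S" by (meson norm_ge_zero order_trans)
    moreover have "norm (L \<phi>) \<le> K0 * ?S" using K0 c by blast
    ultimately show ?thesis
      by (smt (verit) max.cobounded1 max.cobounded2 mult_left_mono mult_right_mono)
  qed
  then show ?thesis by (intro exI[of _ "max K0 0"]) auto
qed

definition ell :: "((real \<Rightarrow> real^'n) \<Rightarrow> real^'n) \<Rightarrow> 'n \<Rightarrow> 'n \<Rightarrow> (real \<Rightarrow> real) \<Rightarrow> real" where
  "ell L i j v = L (\<lambda>\<theta>. axis j (v \<theta>)) $ i"

definition ellc :: "((real \<Rightarrow> real^'n) \<Rightarrow> real^'n) \<Rightarrow> 'n \<Rightarrow> 'n \<Rightarrow> (real \<Rightarrow> complex) \<Rightarrow> complex" where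
  "ellc L i j u = Complex (ell L i j (\<lambda>\<theta>. Re (u \<theta>))) (ell L i j (\<lambda>\<theta>. Im (u \<theta>)))"

lemma axis_scaleR_eq: "axis j (x::real) = x *\<^sub>R axis j 1"
  by (simp add: vec_eq_iff axis_def)

lemma norm_axis_eq: "norm (axis j (x::real)) = \<bar>x\<bar>"
  by (subst axis_scaleR_eq) simp

lemma cont_axis: "continuous_on S v \<Longrightarrow> continuous_on S (\<lambda>\<theta>. axis j ((v::_\<Rightarrow>real) \<theta>))"
  by (subst axis_scaleR_eq) (intro continuous_intros)

lemma ell_add:
  assumes L: "bounded_linear_delay \<tau> L" and "continuous_on {-\<tau>..0} v" "continuous_on {-\<tau>..0} w"
  shows "ell L i j (\<lambda>\<theta>. v \<theta> + w \<theta>) = ell L i j v + ell L i j w"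
proof -
  have "(\<lambda>\<theta>. axis j (v \<theta> + w \<theta>)) = (\<lambda>\<theta>. axis j (v \<theta>) + axis j (w \<theta>))"
    by (rule ext) (simp add: axis_def vec_eq_iff)
  moreover have "L (\<lambda>\<theta>. axis j (v \<theta>) + axis j (w \<theta>)) = L (\<lambda>\<theta>. axis j (v \<theta>)) + L (\<lambda>\<theta>. axis j (w \<theta>))"
    using L assms(2,3) cont_axis unfolding bounded_linear_delay_def by blast
  ultimately show ?thesis unfolding ell_def by simp
qed

lemma ell_scale:
  assumes L: "bounded_linear_delay \<tau> L" and "continuous_on {-\<tau>..0} v"
  shows "ell L i j (\<lambda>\<theta>. c * v \<theta>) = c * ell L i j v"
proof -
  have "(\<lambda>\<theta>. axis j (c * v \<theta>)) = (\<lambda>\<theta>. c *\<^sub>R axis j (v \<theta>))"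
    by (rule ext) (simp add: axis_def vec_eq_iff)
  moreover have "L (\<lambda>\<theta>. c *\<^sub>R axis j (v \<theta>)) = c *\<^sub>R L (\<lambda>\<theta>. axis j (v \<theta>))"
    using L assms(2) cont_axis unfolding bounded_linear_delay_def by blast
  ultimately show ?thesis unfolding ell_def by simp
qed

lemma ell_bound:
  assumes L: "bounded_linear_delay \<tau> L" and tau: "\<tau> > 0"
  shows "\<exists>K\<ge>0. \<forall>i j v M. continuous_on {-\<tau>..0} v \<longrightarrow> (\<forall>\<theta>\<in>{-\<tau>..0}. \<bar>v \<theta>\<bar> \<le> M)
          \<longrightarrow> \<bar>ell L i j v\<bar> \<le> K * M"
proof -
  obtain K where K: "K \<ge> 0" "\<And>\<phi> M. continuous_on {-\<tau>..0} \<phi> \<Longrightarrow> (\<forall>\<theta>\<in>{-\<tau>..0}. norm (\<phi> \<theta>) \<le> M)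
          \<Longrightarrow> norm (L \<phi>) \<le> K * M" using L_bound[OF L tau] by blast
  have "\<bar>ell L i j v\<bar> \<le> K * M" if "continuous_on {-\<tau>..0} v" "\<forall>\<theta>\<in>{-\<tau>..0}. \<bar>v \<theta>\<bar> \<le> M" for i j v M
  proof -
    have "\<bar>ell L i j v\<bar> \<le> norm (L (\<lambda>\<theta>. axis j (v \<theta>)))" unfolding ell_def
      by (rule component_le_norm_cart)
    also have "\<dots> \<le> K * M" using that by (intro K(2) cont_axis) (auto simp: norm_axis_eq)
    finally show ?thesis .
  qed
  with K show ?thesis by blast
qed


lemma cont_Re: "continuous_on S u \<Longrightarrow> continuous_on S (\<lambda>\<theta>. Re (u \<theta>))"
  and cont_Im: "continuous_on S u \<Longrightarrow> continuous_on S (\<lambda>\<theta>. Im (u \<theta>))"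
  by (intro continuous_intros; assumption)+

lemma ellc_add:
  assumes L: "bounded_linear_delay \<tau> L" and "continuous_on {-\<tau>..0} u" "continuous_on {-\<tau>..0} w"
  shows "ellc L i j (\<lambda>\<theta>. u \<theta> + w \<theta>) = ellc L i j u + ellc L i j w"
  using ell_add[OF L cont_Re[OF assms(2)] cont_Re[OF assms(3)]]
        ell_add[OF L cont_Im[OF assms(2)] cont_Im[OF assms(3)]]
  by (simp add: ellc_def complex_eq_iff)

lemma ellc_scale:
  assumes L: "bounded_linear_delay \<tau> L" and u: "continuous_on {-\<tau>..0} u"
  shows "ellc L i j (\<lambda>\<theta>. c * u \<theta>) = c * ellc L i j u"
proof -
  have cR: "continuous_on {-\<tau>..0} (\<lambda>\<theta>. Re (u \<theta>))" and cI: "continuous_on {-\<tau>..0} (\<lambda>\<theta>. Im (u \<theta>))"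
    using cont_Re[OF u] cont_Im[OF u] .
  have c1: "continuous_on {-\<tau>..0} (\<lambda>\<theta>. Re c * Re (u \<theta>))" "continuous_on {-\<tau>..0} (\<lambda>\<theta>. (- Im c) * Im (u \<theta>))"
    "continuous_on {-\<tau>..0} (\<lambda>\<theta>. Im c * Re (u \<theta>))" "continuous_on {-\<tau>..0} (\<lambda>\<theta>. Re c * Im (u \<theta>))"
    using cR cI by (auto intro!: continuous_intros)
  have "ell L i j (\<lambda>\<theta>. Re (c * u \<theta>)) = ell L i j (\<lambda>\<theta>. Re c * Re (u \<theta>) + (- Im c) * Im (u \<theta>))"
    by simp
  also have "\<dots> = Re c * ell L i j (\<lambda>\<theta>. Re (u \<theta>)) + (- Im c) * ell L i j (\<lambda>\<theta>. Im (u \<theta>))"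
    using ell_add[OF L c1(1,2), of i j] ell_scale[OF L cR, of i j "Re c"] ell_scale[OF L cI, of i j "- Im c"] by simp
  finally have 1: "ell L i j (\<lambda>\<theta>. Re (c * u \<theta>)) = Re c * ell L i j (\<lambda>\<theta>. Re (u \<theta>)) - Im c * ell L i j (\<lambda>\<theta>. Im (u \<theta>))"
    by simp
  have "ell L i j (\<lambda>\<theta>. Im (c * u \<theta>)) = ell L i j (\<lambda>\<theta>. Im c * Re (u \<theta>) + Re c * Im (u \<theta>))"
    by (simp add: add.commute)
  also have "\<dots> = Im c * ell L i j (\<lambda>\<theta>. Re (u \<theta>)) + Re c * ell L i j (\<lambda>\<theta>. Im (u \<theta>))"
    using ell_add[OF L c1(3,4), of i j] ell_scale[OF L cR, of i j "Im c"] ell_scale[OF L cI, of i j "Re c"] by simp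
  finally have 2: "ell L i j (\<lambda>\<theta>. Im (c * u \<theta>)) = Im c * ell L i j (\<lambda>\<theta>. Re (u \<theta>)) + Re c * ell L i j (\<lambda>\<theta>. Im (u \<theta>))" .
  show ?thesis using 1 2 by (simp add: ellc_def complex_eq_iff)
qed

lemma ellc_bound:
  assumes L: "bounded_linear_delay \<tau> L" and tau: "\<tau> > 0"
  shows "\<exists>K\<ge>0. \<forall>i j u M. continuous_on {-\<tau>..0} u \<longrightarrow> (\<forall>\<theta>\<in>{-\<tau>..0}. norm (u \<theta>) \<le> M)
          \<longrightarrow> norm (ellc L i j u) \<le> K * M"
proof -
  obtain K where K: "K \<ge> 0" "\<And>i j v M. continuous_on {-\<tau>..0} v \<Longrightarrow> (\<forall>\<theta>\<in>{-\<tau>..0}. \<bar>v \<theta>\<bar> \<le> M)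
          \<Longrightarrow> \<bar>ell L i j v\<bar> \<le> K * M" using ell_bound[OF L tau] by blast
  have "norm (ellc L i j u) \<le> (2*K) * M" if u: "continuous_on {-\<tau>..0} u" and b: "\<forall>\<theta>\<in>{-\<tau>..0}. norm (u \<theta>) \<le> M" for i j u M
  proof -
    have "\<bar>ell L i j (\<lambda>\<theta>. Re (u \<theta>))\<bar> \<le> K * M"
      using b abs_Re_le_cmod order_trans by (intro K(2) cont_Re[OF u]) blast
    moreover have "\<bar>ell L i j (\<lambda>\<theta>. Im (u \<theta>))\<bar> \<le> K * M"
      using b abs_Im_le_cmod order_trans by (intro K(2) cont_Im[OF u]) blast
    moreover have "norm (ellc L i j u) \<le> \<bar>ell L i j (\<lambda>\<theta>. Re (u \<theta>))\<bar> + \<bar>ell L i j (\<lambda>\<theta>. Im (u \<theta>))\<bar>"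
      unfolding ellc_def using cmod_le[of "Complex _ _"] by simp
    ultimately show ?thesis by simp
  qed
  with K show ?thesis by (intro exI[of _ "2*K"]) auto
qed

lemma Lexp_eq: "Lexp L z $ i $ j = ellc L i j (\<lambda>\<theta>. exp (z * of_real \<theta>))"
proof -
  have "(\<lambda>\<theta>. \<chi> k. Re (axis j (exp (z * of_real \<theta>)) $ k)) = (\<lambda>\<theta>. axis j (Re (exp (z * of_real \<theta>))))"
       "(\<lambda>\<theta>. \<chi> k. Im (axis j (exp (z * of_real \<theta>)) $ k)) = (\<lambda>\<theta>. axis j (Im (exp (z * of_real \<theta>))))"
    by (rule ext, simp add: vec_eq_iff axis_def)+
  then show ?thesis unfolding Lexp_def cext_def ellc_def ell_def by simp
qed


lemma exp_minus1_bound: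
  fixes w :: complex assumes "norm w \<le> 1" shows "norm (exp w - 1) \<le> 3 * norm w"
proof -
  have "norm (exp w - exp 0) \<le> 3 * norm (w - 0)"
  proof (rule field_differentiable_bound[of "cball 0 1" exp exp])
    fix z :: complex assume "z \<in> cball 0 1"
    then have "norm (exp z) \<le> exp 1" using norm_exp[of z] by (meson exp_le_cancel_iff mem_cball_0 order_trans)
    then show "norm (exp z) \<le> 3" using exp_le by linarith
  qed (use assms in \<open>auto intro!: derivative_eq_intros\<close>)
  then show ?thesis by simp
qed

lemma exp_rem_bound:
  fixes w :: complex assumes "norm w \<le> 1" shows "norm (exp w - 1 - w) \<le> 3 * (norm w)^2"
proof -
  have "norm ((exp w - w) - (exp 0 - 0)) \<le> (3 * norm w) * norm (w - 0)"
  proof (rule field_differentiable_bound[of "cball 0 (norm w)" "\<lambda>z. exp z - z" "\<lambda>z. exp z - 1"])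
    fix z :: complex assume "z \<in> cball 0 (norm w)"
    then have "norm z \<le> norm w" by simp
    then show "norm (exp z - 1) \<le> 3 * norm w" using exp_minus1_bound[of z] assms by linarith
  qed (use assms in \<open>auto intro!: derivative_eq_intros\<close>)
  then show ?thesis by (simp add: power2_eq_square algebra_simps)
qed

lemma ellc_lin:
  assumes L: "bounded_linear_delay \<tau> L" and "continuous_on {-\<tau>..0} u" "continuous_on {-\<tau>..0} w"
  shows "ellc L i j (\<lambda>\<theta>. u \<theta> + c * w \<theta>) = ellc L i j u + c * ellc L i j w"
proof -
  have "continuous_on {-\<tau>..0} (\<lambda>\<theta>. c * w \<theta>)" using assms(3) by (intro continuous_intros)
  then show ?thesis using ellc_add[OF L assms(2)] ellc_scale[OF L assms(3)] by simp
qed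

definition Ak :: "((real \<Rightarrow> real^'n) \<Rightarrow> real^'n) \<Rightarrow> 'n \<Rightarrow> 'n \<Rightarrow> nat \<Rightarrow> complex \<Rightarrow> complex" where
  "Ak L i j k z = ellc L i j (\<lambda>\<theta>. of_real \<theta> ^ k * exp (z * of_real \<theta>))"

lemma Ak_deriv:
  assumes L: "bounded_linear_delay \<tau> L" and tau: "\<tau> > 0"
  shows "(Ak L i j k has_field_derivative Ak L i j (Suc k) z) (at z)"
proof -
  obtain K where K: "K \<ge> 0" "\<And>i j u M. continuous_on {-\<tau>..0} u \<Longrightarrow> (\<forall>\<theta>\<in>{-\<tau>..0}. norm (u \<theta>) \<le> M)
          \<Longrightarrow> norm (ellc L i j u) \<le> K * M" using ellc_bound[OF L tau] by blast
  define C where "C = \<tau>^k * exp (norm z * \<tau>) * 3 * \<tau>^2"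
  have C0: "C \<ge> 0" using tau by (simp add: C_def)
  let ?f = "Ak L i j k" and ?D = "Ak L i j (Suc k) z"
  have key: "norm (?f y - ?f z - (y - z) * ?D) \<le> K * C * (norm (y - z))^2"
    if y: "norm (y - z) * \<tau> \<le> 1" for y
  proof -
    let ?h = "y - z"
    have cts: "continuous_on {-\<tau>..0} (\<lambda>\<theta>. of_real \<theta> ^ m * exp (x * of_real \<theta>) :: complex)" for m and x :: complex
      by (intro continuous_intros)
    have "?f y - ?f z - ?h * ?D =
      ellc L i j (\<lambda>\<theta>. (of_real \<theta> ^ k * exp (y * of_real \<theta>) + (-1) * (of_real \<theta> ^ k * exp (z * of_real \<theta>)))
         + (- ?h) * (of_real \<theta> ^ Suc k * exp (z * of_real \<theta>)))"
      unfolding Ak_def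
      by (subst ellc_lin[OF L _ cts], intro continuous_intros, subst ellc_lin[OF L cts cts]) (simp add: algebra_simps)
    also have "(\<lambda>\<theta>. (of_real \<theta> ^ k * exp (y * of_real \<theta>) + (-1) * (of_real \<theta> ^ k * exp (z * of_real \<theta>)))
         + (- ?h) * (of_real \<theta> ^ Suc k * exp (z * of_real \<theta>))) =
         (\<lambda>\<theta>. of_real \<theta> ^ k * exp (z * of_real \<theta>) * (exp (?h * of_real \<theta>) - 1 - ?h * of_real \<theta>))"
    proof
      fix \<theta> :: real
      have "exp (y * of_real \<theta>) = exp (z * of_real \<theta>) * exp (?h * of_real \<theta>)"
        by (simp add: exp_add[symmetric] algebra_simps)
      then show "(of_real \<theta> ^ k * exp (y * of_real \<theta>) + (-1) * (of_real \<theta> ^ k * exp (z * of_real \<theta>)))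
         + (- ?h) * (of_real \<theta> ^ Suc k * exp (z * of_real \<theta>)) =
         of_real \<theta> ^ k * exp (z * of_real \<theta>) * (exp (?h * of_real \<theta>) - 1 - ?h * of_real \<theta>)"
        by (simp add: algebra_simps)
    qed
    also have "norm (ellc L i j \<dots>) \<le> K * (C * (norm ?h)^2)"
    proof (rule K(2))
      show "continuous_on {-\<tau>..0} (\<lambda>\<theta>. of_real \<theta> ^ k * exp (z * of_real \<theta>) * (exp (?h * of_real \<theta>) - 1 - ?h * of_real \<theta>))"
        by (intro continuous_intros)
      show "\<forall>\<theta>\<in>{-\<tau>..0}. norm (of_real \<theta> ^ k * exp (z * of_real \<theta>) * (exp (?h * of_real \<theta>) - 1 - ?h * of_real \<theta>)) \<le> C * (norm ?h)^2"
      proof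
        fix \<theta> assume th: "\<theta> \<in> {-\<tau>..0}"
        then have ath: "\<bar>\<theta>\<bar> \<le> \<tau>" by auto
        have n1: "norm (of_real \<theta> ^ k :: complex) \<le> \<tau>^k"
          by (simp add: norm_power power_mono ath)
        have "norm (exp (z * of_real \<theta>)) \<le> exp (norm (z * of_real \<theta>))" by (rule norm_exp)
        also have "\<dots> \<le> exp (norm z * \<tau>)" using ath by (simp add: norm_mult mult_left_mono)
        finally have n2: "norm (exp (z * of_real \<theta>)) \<le> exp (norm z * \<tau>)" .
        have nh: "norm (?h * of_real \<theta>) \<le> norm ?h * \<tau>" using ath by (simp add: norm_mult mult_left_mono)
        have "norm (exp (?h * of_real \<theta>) - 1 - ?h * of_real \<theta>) \<le> 3 * (norm (?h * of_real \<theta>))^2"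
          using nh y by (intro exp_rem_bound) linarith
        also have "\<dots> \<le> 3 * (norm ?h * \<tau>)^2" using nh by (intro mult_left_mono power_mono) auto
        finally have n3: "norm (exp (?h * of_real \<theta>) - 1 - ?h * of_real \<theta>) \<le> 3 * (norm ?h * \<tau>)^2" .
        have "norm (of_real \<theta> ^ k * exp (z * of_real \<theta>) * (exp (?h * of_real \<theta>) - 1 - ?h * of_real \<theta>))
           \<le> \<tau>^k * exp (norm z * \<tau>) * (3 * (norm ?h * \<tau>)^2)"
          unfolding norm_mult by (intro mult_mono n1 n2 n3) (auto simp: tau less_imp_le)
        also have "\<dots> = C * (norm ?h)^2" by (simp add: C_def power_mult_distrib)
        finally show "norm (of_real \<theta> ^ k * exp (z * of_real \<theta>) * (exp (?h * of_real \<theta>) - 1 - ?h * of_real \<theta>)) \<le> C * (norm ?h)^2" .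
      qed
    qed
    finally show ?thesis by (simp add: mult.assoc)
  qed
  have "((\<lambda>y. (?f y - ?f z) / (y - z) - ?D) \<longlongrightarrow> 0) (at z)"
  proof (rule Lim_null_comparison)
    show "\<forall>\<^sub>F y in at z. norm ((?f y - ?f z) / (y - z) - ?D) \<le> K * C * norm (y - z)"
      unfolding eventually_at
    proof (intro exI[of _ "1/\<tau>"] conjI ballI impI)
      fix y assume y: "y \<in> UNIV" "y \<noteq> z \<and> dist y z < 1 / \<tau>"
      then have "norm (y - z) * \<tau> \<le> 1" using tau by (simp add: dist_norm field_simps)
      note k = key[OF this]
      have nz: "norm (y - z) > 0" using y by simp
      have "(?f y - ?f z) / (y - z) - ?D = (?f y - ?f z - (y - z) * ?D) / (y - z)"
        using y by (simp add: field_simps)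
      then have "norm ((?f y - ?f z) / (y - z) - ?D) = norm (?f y - ?f z - (y - z) * ?D) / norm (y - z)"
        by (simp add: norm_divide)
      also have "\<dots> \<le> K * C * (norm (y - z))^2 / norm (y - z)"
        using k nz by (intro divide_right_mono) auto
      also have "\<dots> = K * C * norm (y - z)" using nz by (simp add: power2_eq_square)
      finally show "norm ((?f y - ?f z) / (y - z) - ?D) \<le> K * C * norm (y - z)" .
    qed (use tau in auto)
    have "((\<lambda>y. K * C * norm (y - z)) \<longlongrightarrow> K * C * norm (z - z)) (at z)"
      by (intro tendsto_intros)
    then show "((\<lambda>y. K * C * norm (y - z)) \<longlongrightarrow> 0) (at z)" by simp
  qed
  then show ?thesis unfolding has_field_derivative_iff by (simp add: LIM_zero_iff)
qed


lemma cont_if_const[continuous_intros]: "continuous_on S f \<Longrightarrow> continuous_on S (\<lambda>x. if b then f x else 0)"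
  by (cases b) auto

lemma Ak_cont:
  assumes L: "bounded_linear_delay \<tau> L" and tau: "\<tau> > 0"
  shows "continuous_on S (Ak L i j k)"
  by (rule DERIV_continuous_on, rule has_field_derivative_at_within, rule Ak_deriv[OF L tau])

definition EE :: "((real \<Rightarrow> real^'n) \<Rightarrow> real^'n) \<Rightarrow> real \<Rightarrow> 'n \<Rightarrow> 'n \<Rightarrow> complex \<Rightarrow> complex" where
  "EE L \<epsilon> i j z = (if i = j then of_real (\<epsilon>^2) * z^2 - z else 0) + Ak L i j 0 z"
definition EE' :: "((real \<Rightarrow> real^'n) \<Rightarrow> real^'n) \<Rightarrow> real \<Rightarrow> 'n \<Rightarrow> 'n \<Rightarrow> complex \<Rightarrow> complex" where
  "EE' L \<epsilon> i j z = (if i = j then 2 * of_real (\<epsilon>^2) * z - 1 else 0) + Ak L i j 1 z"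

definition FF :: "((real \<Rightarrow> real^'n) \<Rightarrow> real^'n) \<Rightarrow> real \<Rightarrow> complex \<Rightarrow> complex" where
  "FF L \<epsilon> z = (\<Sum>p\<in>{p. p permutes (UNIV::'n set)}. of_int (sign p) * (\<Prod>i\<in>UNIV. EE L \<epsilon> i (p i) z))"
definition GG :: "((real \<Rightarrow> real^'n) \<Rightarrow> real^'n) \<Rightarrow> real \<Rightarrow> complex \<Rightarrow> complex" where
  "GG L \<epsilon> z = (\<Sum>p\<in>{p. p permutes (UNIV::'n set)}. of_int (sign p) *
      (\<Sum>k\<in>UNIV. EE' L \<epsilon> k (p k) z * (\<Prod>i\<in>UNIV-{k}. EE L \<epsilon> i (p i) z)))"

lemma Delta_entry: "Delta L \<epsilon> z $ i $ j = EE L \<epsilon> i j z"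
  unfolding Delta_def EE_def Ak_def by (simp add: Lexp_eq mat_def)

lemma det_Delta: "det (Delta L \<epsilon> z) = FF L \<epsilon> z"
  unfolding det_def FF_def Delta_entry ..

lemma EE_deriv:
  assumes L: "bounded_linear_delay \<tau> L" and tau: "\<tau> > 0"
  shows "(EE L \<epsilon> i j has_field_derivative EE' L \<epsilon> i j z) (at z)"
proof -
  have d: "\<And>i j. (Ak L i j 0 has_field_derivative Ak L i j (Suc 0) z) (at z)" by (rule Ak_deriv[OF L tau])
  show ?thesis unfolding EE_def EE'_def
    by (cases "i = j") (auto intro!: derivative_eq_intros d)
qed

lemma FF_deriv:
  assumes L: "bounded_linear_delay \<tau> L" and tau: "\<tau> > 0"
  shows "(FF L \<epsilon> has_field_derivative GG L \<epsilon> z) (at z)"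
  unfolding FF_def[abs_def] GG_def
  by (intro DERIV_sum DERIV_cmult has_field_derivative_prod EE_deriv[OF L tau])

lemma FF_cont:
  assumes L: "bounded_linear_delay \<tau> L" and tau: "\<tau> > 0"
  shows "continuous_on S (\<lambda>p::real\<times>complex. FF L (fst p) (snd p))"
proof -
  have [continuous_intros]: "continuous_on S (\<lambda>p::real\<times>complex. Ak L i j k (snd p))" for i j k
    by (rule continuous_on_compose2[OF Ak_cont[OF L tau, of UNIV]]) (auto intro: continuous_intros)
  show ?thesis unfolding FF_def EE_def by (intro continuous_intros)
qed

lemma GG_cont:
  assumes L: "bounded_linear_delay \<tau> L" and tau: "\<tau> > 0"
  shows "continuous_on S (\<lambda>p::real\<times>complex. GG L (fst p) (snd p))"
proof -
  have [continuous_intros]: "continuous_on S (\<lambda>p::real\<times>complex. Ak L i j k (snd p))" for i j k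
    by (rule continuous_on_compose2[OF Ak_cont[OF L tau, of UNIV]]) (auto intro: continuous_intros)
  show ?thesis unfolding GG_def EE_def EE'_def by (intro continuous_intros)
qed


lemma Ak0_bound:
  assumes L: "bounded_linear_delay \<tau> L" and tau: "\<tau> > 0"
  shows "\<exists>C\<ge>0. \<forall>z i j. Re z \<ge> 0 \<longrightarrow> norm (Ak L i j 0 z) \<le> C"
proof -
  obtain K where K: "K \<ge> 0" "\<And>i j u M. continuous_on {-\<tau>..0} u \<Longrightarrow> (\<forall>\<theta>\<in>{-\<tau>..0}. norm (u \<theta>) \<le> M)
          \<Longrightarrow> norm (ellc L i j u) \<le> K * M" using ellc_bound[OF L tau] by blast
  have "norm (Ak L i j 0 z) \<le> K * 1" if "Re z \<ge> 0" for z i j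
    unfolding Ak_def
  proof (rule K(2))
    show "continuous_on {-\<tau>..0} (\<lambda>\<theta>. complex_of_real \<theta> ^ 0 * exp (z * complex_of_real \<theta>))"
      by (intro continuous_intros)
    show "\<forall>\<theta>\<in>{-\<tau>..0}. norm (complex_of_real \<theta> ^ 0 * exp (z * complex_of_real \<theta>)) \<le> 1"
      using that by (auto simp: norm_exp_eq_Re mult_nonneg_nonpos)
  qed
  with K show ?thesis by auto
qed

lemma det_zero_bound:
  fixes M :: "complex^'n^'n"
  assumes C: "\<And>i j. norm (M $ i $ j) \<le> C" and d: "det (mat a + M) = 0"
  shows "norm a \<le> real CARD('n) * C"
proof -
  let ?A = "mat a + M"
  have "\<not> inj ((*v) ?A)"
    using det_nz_iff_inj_gen[OF matrix_vector_mul_linear_gen, of ?A] d by simp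
  then obtain x y where xy: "x \<noteq> y" "?A *v x = ?A *v y" unfolding inj_def by blast
  define v where "v = x - y"
  have v0: "v \<noteq> 0" using xy by (simp add: v_def)
  have Av: "?A *v v = 0" using xy by (simp add: v_def matrix_vector_mult_diff_distrib)
  define m where "m = Max (range (\<lambda>j. norm (v $ j)))"
  have "m \<in> range (\<lambda>j. norm (v $ j))" unfolding m_def by (rule Max_in) auto
  then obtain i where im: "norm (v $ i) = m" by auto
  have mj: "norm (v $ j) \<le> m" for j unfolding m_def by (rule Max_ge) auto
  have "m > 0"
  proof -
    obtain j where "v $ j \<noteq> 0" using v0 by (auto simp: vec_eq_iff)
    then show ?thesis using mj[of j] by (meson less_le_trans zero_less_norm_iff)
  qed
  have "(?A *v v) $ i = a * v $ i + (\<Sum>j\<in>UNIV. M $ i $ j * v $ j)"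
  proof -
    have "(?A *v v) $ i = (\<Sum>j\<in>UNIV. (if i = j then a * v $ j else 0) + M $ i $ j * v $ j)"
      unfolding matrix_vector_mult_def mat_def by (auto intro!: sum.cong simp: distrib_right)
    also have "\<dots> = a * v $ i + (\<Sum>j\<in>UNIV. M $ i $ j * v $ j)"
      by (simp add: sum.distrib)
    finally show ?thesis .
  qed
  then have eq: "a * v $ i = - (\<Sum>j\<in>UNIV. M $ i $ j * v $ j)" using Av by (simp add: eq_neg_iff_add_eq_0)
  have "norm a * m = norm (\<Sum>j\<in>UNIV. M $ i $ j * v $ j)"
    using eq im by (metis norm_minus_cancel norm_mult)
  also have "\<dots> \<le> (\<Sum>j\<in>(UNIV::'n set). C * m)"
    by (intro sum_norm_le) (auto simp: norm_mult intro!: mult_mono C mj order_trans[OF norm_ge_zero C])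
  also have "\<dots> = real CARD('n) * C * m" by simp
  finally show ?thesis using \<open>m > 0\<close> by simp
qed


lemma dist_pair_le: "dist (a::real, b::complex) (c, d) \<le> dist a c + dist b d"
proof -
  have "dist (a, b) (c, d) = sqrt ((dist a c)^2 + (dist b d)^2)" by (simp add: dist_prod_def)
  also have "\<dots> \<le> sqrt ((dist a c + dist b d)^2)"
    by (intro real_sqrt_le_mono) (simp add: power2_eq_square algebra_simps)
  also have "\<dots> = dist a c + dist b d" by simp
  finally show ?thesis .
qed

lemma apriori:
  fixes z :: complex and e B X :: real
  assumes e: "e > 0" and B: "B \<ge> 0" and X: "X \<ge> 0" and small: "e * (X + 2*B + 1) < 1"
    and rz: "Re z \<le> X" and nb: "norm (of_real e * z^2 - z) \<le> B"
  shows "norm z \<le> 2 * B"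
proof -
  have fac: "of_real e * z^2 - z = z * (of_real e * z - 1)" by (simp add: power2_eq_square algebra_simps)
  have nb2: "norm z * norm (of_real e * z - 1) \<le> B" using nb unfolding fac norm_mult .
  show ?thesis
  proof (cases "norm (of_real e * z) \<le> 1/2")
    case True
    have "1 - norm (of_real e * z) \<le> norm (of_real e * z - 1)"
      using norm_triangle_ineq3[of 1 "of_real e * z"] by (simp add: norm_minus_commute)
    then have h: "1/2 \<le> norm (of_real e * z - 1)" using True by linarith
    have "norm z * (1/2) \<le> norm z * norm (of_real e * z - 1)" by (intro mult_left_mono h) auto
    then show ?thesis using nb2 by linarith
  next
    case False
    then have nz: "e * norm z > 1/2" using e by (simp add: norm_mult)
    then have pz: "norm z > 0" by (cases "z = 0") auto
    have "norm (of_real e * z - 1) \<le> B / norm z" using nb2 pz by (simp add: field_simps)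
    also have "\<dots> \<le> B * (2 * e)"
    proof -
      have "1 / norm z < 2 * e" using nz pz by (simp add: field_simps)
      then have "B * (1 / norm z) \<le> B * (2 * e)" using B by (intro mult_left_mono) auto
      then show ?thesis by simp
    qed
    finally have w: "norm (of_real e * z - 1) \<le> 2 * B * e" by simp
    have "1 - Re (of_real e * z) \<le> norm (of_real e * z - 1)"
      using abs_Re_le_cmod[of "of_real e * z - 1"] by simp
    then have "1 - e * Re z \<le> 2 * B * e" using w by simp
    moreover have "e * Re z \<le> e * X" using rz e by simp
    ultimately have "1 \<le> e * (X + 2 * B)" by (simp add: algebra_simps)
    then show ?thesis using small e by (simp add: algebra_simps)
  qed
qed



theorem lemma4p1:
  fixes L :: "(real \<Rightarrow> real^'n) \<Rightarrow> real^'n"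
    and \<tau> lam0 :: real and lam :: "real \<Rightarrow> real"
  assumes tau: "\<tau> > 0"
    and L: "bounded_linear_delay \<tau> L"
    and pos: "lam0 > 0"
    and root0: "det (Delta L 0 (of_real lam0)) = 0"
    and simple0: "deriv (\<lambda>z. det (Delta L 0 z)) (of_real lam0) \<noteq> 0"
    and dominant: "\<And>z. det (Delta L 0 z) = 0 \<Longrightarrow> z \<noteq> of_real lam0 \<Longrightarrow> Re z < lam0"
    and lam_root: "\<forall>\<^sub>F \<epsilon> in at_right 0. det (Delta L \<epsilon> (of_real (lam \<epsilon>))) = 0"
    and lam_simple: "\<forall>\<^sub>F \<epsilon> in at_right 0.
                       deriv (\<lambda>z. det (Delta L \<epsilon> z)) (of_real (lam \<epsilon>)) \<noteq> 0"
    and lam_lim: "(lam \<longlongrightarrow> lam0) (at_right 0)"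
  shows "\<exists>\<delta>0>0. \<forall>\<delta>. 0 < \<delta> \<and> \<delta> < \<delta>0 \<longrightarrow> (\<forall>\<delta>1>0. \<exists>\<epsilon>0>0. \<forall>\<epsilon>. 0 < \<epsilon> \<and> \<epsilon> < \<epsilon>0 \<longrightarrow>
           det (Delta L \<epsilon> (of_real (lam \<epsilon>))) = 0 \<and>
           (\<forall>z. lam0 - \<delta> \<le> Re z \<and> Re z \<le> lam0 + \<delta>1 \<and> det (Delta L \<epsilon> z) = 0
                \<longrightarrow> z = of_real (lam \<epsilon>)))"
proof -
  define c where "c = GG L 0 (of_real lam0)"
  have "deriv (\<lambda>z. det (Delta L 0 z)) (of_real lam0) = c"
    unfolding det_Delta c_def by (rule DERIV_imp_deriv[OF FF_deriv[OF L tau]])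
  then have c0: "c \<noteq> 0" using simple0 by simp
  obtain C0 where C0: "C0 \<ge> 0" "\<And>z i j. Re z \<ge> 0 \<Longrightarrow> norm (Ak L i j 0 z) \<le> C0"
    using Ak0_bound[OF L tau] by blast
  define B where "B = real CARD('n) * C0"
  have B0: "B \<ge> 0" using C0 by (simp add: B_def)
  have apB: "norm (of_real (\<epsilon>^2) * z^2 - z) \<le> B" if "Re z \<ge> 0" "det (Delta L \<epsilon> z) = 0" for \<epsilon> z
  proof -
    have "Delta L \<epsilon> z = mat (of_real (\<epsilon>^2) * z^2 - z) + Lexp L z" by (simp add: Delta_def)
    moreover have "norm (Lexp L z $ i $ j) \<le> C0" for i j
      using C0(2)[OF that(1), of i j] by (simp add: Lexp_eq Ak_def)
    ultimately show ?thesis unfolding B_def using that(2) by (intro det_zero_bound[of "Lexp L z" C0]) auto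
  qed
  define R where "R = 2 * B"
  have "isCont (\<lambda>p. GG L (fst p) (snd p)) (0, of_real lam0)"
    using GG_cont[OF L tau, of UNIV] by (simp add: continuous_on_eq_continuous_at)
  then obtain d1 where d1: "d1 > 0" "\<And>p. dist p (0, of_real lam0) < d1 \<Longrightarrow>
       dist (GG L (fst p) (snd p)) c < norm c / 2"
  proof -
    assume a: "\<And>d1. d1 > 0 \<Longrightarrow> (\<And>p. dist p (0, of_real lam0) < d1 \<Longrightarrow>
       dist (GG L (fst p) (snd p)) c < norm c / 2) \<Longrightarrow> thesis"
    have "norm c / 2 > 0" using c0 by simp
    from \<open>isCont _ _\<close>[unfolded continuous_at_eps_delta, rule_format, OF this] obtain d where
      "d > 0" "\<forall>x'. dist x' (0, of_real lam0) < d \<longrightarrow> dist (GG L (fst x') (snd x')) c < norm c / 2"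
      unfolding c_def by auto
    then show thesis using a by blast
  qed
  define r where "r = d1 / 2"
  have r0: "r > 0" using d1 by (simp add: r_def)
  have inj: "z = w" if e: "0 \<le> \<epsilon>" "\<epsilon> < r" and zw: "z \<in> ball (of_real lam0) r" "w \<in> ball (of_real lam0) r"
      and eq: "FF L \<epsilon> z = FF L \<epsilon> w" for \<epsilon> z w
  proof -
    have "norm ((FF L \<epsilon> z - c * z) - (FF L \<epsilon> w - c * w)) \<le> norm c / 2 * norm (z - w)"
    proof (rule field_differentiable_bound[of "ball (of_real lam0) r" _ "\<lambda>x. GG L \<epsilon> x - c"])
      fix x assume x: "x \<in> ball (complex_of_real lam0) r"
      show "((\<lambda>x. FF L \<epsilon> x - c * x) has_field_derivative GG L \<epsilon> x - c) (at x within ball (of_real lam0) r)"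
      proof -
        have dF: "(FF L \<epsilon> has_field_derivative GG L \<epsilon> x) (at x within ball (of_real lam0) r)"
          by (rule has_field_derivative_at_within[OF FF_deriv[OF L tau]])
        have dc: "((\<lambda>x. c * x) has_field_derivative c) (at x within ball (of_real lam0) r)"
          by (rule DERIV_cmult_Id)
        show ?thesis using DERIV_diff[OF dF dc] .
      qed
      have "dist (\<epsilon>, x) (0, of_real lam0) \<le> dist \<epsilon> 0 + dist x (of_real lam0)" by (rule dist_pair_le)
      also have "\<dots> < d1" using e x by (simp add: r_def dist_commute)
      finally have "dist (GG L \<epsilon> x) c < norm c / 2" using d1(2)[of "(\<epsilon>, x)"] by simp
      then show "norm (GG L \<epsilon> x - c) \<le> norm c / 2" by (simp add: dist_norm)
    qed (use zw in auto)
    also have "(FF L \<epsilon> z - c * z) - (FF L \<epsilon> w - c * w) = - (c * (z - w))" using eq by (simp add: algebra_simps)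
    finally have "norm c * norm (z - w) \<le> norm c / 2 * norm (z - w)" by (simp add: norm_mult)
    then have "norm c * norm (z - w) \<le> 0" by linarith
    then have "norm (z - w) = 0" using c0 by (simp add: mult_le_0_iff)
    then show ?thesis by simp
  qed
  define S where "S = {z. norm z \<le> R + 1 \<and> Re z \<ge> lam0 \<and> norm (z - of_real lam0) \<ge> r/2}"
  have cS: "compact S"
  proof -
    have "closed S" unfolding S_def
      by (intro closed_Collect_conj closed_Collect_le continuous_intros)
    moreover have "bounded S" unfolding S_def bounded_iff by (intro exI[of _ "R+1"]) auto
    ultimately show ?thesis by (simp add: compact_eq_bounded_closed)
  qed
  have nz: "FF L 0 z \<noteq> 0" if "z \<in> S" for z
  proof
    assume "FF L 0 z = 0"
    then have "det (Delta L 0 z) = 0" by (simp add: det_Delta)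
    moreover have "z \<noteq> of_real lam0" using that r0 by (auto simp: S_def)
    ultimately have "Re z < lam0" by (rule dominant)
    then show False using that by (simp add: S_def)
  qed
  obtain m where m: "m > 0" "\<And>z. z \<in> S \<Longrightarrow> m \<le> norm (FF L 0 z)"
  proof (cases "S = {}")
    case True then show ?thesis using that[of 1] by auto
  next
    case False
    have "continuous_on S (FF L 0)"
      by (rule DERIV_continuous_on, rule has_field_derivative_at_within[OF FF_deriv[OF L tau]])
    then have "continuous_on S (\<lambda>z. norm (FF L 0 z))" by (intro continuous_intros)
    then obtain z0 where "z0 \<in> S" "\<And>z. z \<in> S \<Longrightarrow> norm (FF L 0 z0) \<le> norm (FF L 0 z)"
      using continuous_attains_inf[OF cS False] by blast
    then show ?thesis using that[of "norm (FF L 0 z0)"] nz by auto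
  qed
  define T where "T = {0..1::real} \<times> cball (0::complex) (R + 1)"
  have uc: "uniformly_continuous_on T (\<lambda>p. FF L (fst p) (snd p))"
    by (rule compact_uniformly_continuous[OF FF_cont[OF L tau]]) (simp add: T_def compact_Times)
  have "m / 2 > 0" using m(1) by simp
  from uc[unfolded uniformly_continuous_on_def, rule_format, OF this] obtain d2 where
    d2: "d2 > 0" "\<forall>x\<in>T. \<forall>x'\<in>T. dist x' x < d2 \<longrightarrow>
      dist (FF L (fst x') (snd x')) (FF L (fst x) (snd x)) < m / 2"
    by blast
  define \<delta>0 where "\<delta>0 = min (d2 / 2) (min (r / 2) (min lam0 1))"
  have "\<delta>0 > 0" using d2 r0 pos by (simp add: \<delta>0_def)
  moreover have "\<exists>\<epsilon>0>0. \<forall>\<epsilon>. 0 < \<epsilon> \<and> \<epsilon> < \<epsilon>0 \<longrightarrow>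
           det (Delta L \<epsilon> (of_real (lam \<epsilon>))) = 0 \<and>
           (\<forall>z. lam0 - \<delta> \<le> Re z \<and> Re z \<le> lam0 + \<delta>1 \<and> det (Delta L \<epsilon> z) = 0
                \<longrightarrow> z = of_real (lam \<epsilon>))"
    if \<delta>: "0 < \<delta>" "\<delta> < \<delta>0" and \<delta>1: "\<delta>1 > 0" for \<delta> \<delta>1
  proof -
    define X where "X = lam0 + \<delta>1"
    have X0: "X \<ge> 0" using pos \<delta>1 by (simp add: X_def)
    have "\<forall>\<^sub>F \<epsilon> in at_right 0. det (Delta L \<epsilon> (of_real (lam \<epsilon>))) = 0 \<and> dist (lam \<epsilon>) lam0 < r"
      using lam_root tendstoD[OF lam_lim r0] by eventually_elim auto
    then obtain b where b: "b > 0" "\<And>\<epsilon>. 0 < \<epsilon> \<Longrightarrow> \<epsilon> < b \<Longrightarrow>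
        det (Delta L \<epsilon> (of_real (lam \<epsilon>))) = 0 \<and> dist (lam \<epsilon>) lam0 < r"
      unfolding eventually_at_right_field by auto
    define \<epsilon>0 where "\<epsilon>0 = min b (min r (min (d2/2) (min 1 (1 / (X + 2*B + 1)))))"
    have pXB: "X + 2*B + 1 > 0" using X0 B0 by simp
    have "\<epsilon>0 > 0" using b r0 d2 pXB by (simp add: \<epsilon>0_def)
    moreover have "det (Delta L \<epsilon> (of_real (lam \<epsilon>))) = 0 \<and>
           (\<forall>z. lam0 - \<delta> \<le> Re z \<and> Re z \<le> lam0 + \<delta>1 \<and> det (Delta L \<epsilon> z) = 0
                \<longrightarrow> z = of_real (lam \<epsilon>))" if e: "0 < \<epsilon>" "\<epsilon> < \<epsilon>0" for \<epsilon>
    proof -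
      have bl: "det (Delta L \<epsilon> (of_real (lam \<epsilon>))) = 0" "dist (lam \<epsilon>) lam0 < r"
        using b(2)[of \<epsilon>] e by (auto simp: \<epsilon>0_def)
      have e1: "\<epsilon> < 1" "\<epsilon> < r" "\<epsilon> < d2/2" "\<epsilon> < 1 / (X + 2*B + 1)" using e by (auto simp: \<epsilon>0_def)
      have small: "\<epsilon>^2 * (X + 2*B + 1) < 1"
      proof -
        have "\<epsilon>^2 \<le> \<epsilon>" using e e1 by (simp add: power2_eq_square mult_le_cancel_right1 less_imp_le)
        then have "\<epsilon>^2 < 1 / (X + 2*B + 1)" using e1 by linarith
        then show ?thesis using pXB by (simp add: field_simps)
      qed
      have "z = of_real (lam \<epsilon>)" if z: "lam0 - \<delta> \<le> Re z" "Re z \<le> lam0 + \<delta>1" "det (Delta L \<epsilon> z) = 0" for z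
      proof -
        have dl: "\<delta> < lam0" "\<delta> < 1" "\<delta> < r/2" "\<delta> < d2/2" using \<delta> by (auto simp: \<delta>0_def)
        have rz0: "Re z \<ge> 0" using z dl by linarith
        have nzR: "norm z \<le> R"
          unfolding R_def
          by (rule apriori[of "\<epsilon>^2" B X]) (use e B0 X0 small z apB[OF rz0 z(3)] in \<open>auto simp: X_def\<close>)
        show ?thesis
        proof (cases "norm (z - of_real lam0) < r")
          case True
          have "FF L \<epsilon> z = FF L \<epsilon> (of_real (lam \<epsilon>))" using z(3) bl(1) by (simp add: det_Delta)
          moreover have "of_real (lam \<epsilon>) \<in> ball (complex_of_real lam0) r"
            using bl(2) by (simp add: dist_norm norm_minus_commute flip: of_real_diff)
          moreover have "z \<in> ball (complex_of_real lam0) r" using True by (simp add: dist_norm norm_minus_commute)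
          ultimately show ?thesis using inj[of \<epsilon> z "of_real (lam \<epsilon>)"] e e1 by auto
        next
          case False
          define s where "s = max 0 (lam0 - Re z)"
          define z' where "z' = z + of_real s"
          have s: "0 \<le> s" "s \<le> \<delta>" using z(1) \<delta> by (auto simp: s_def)
          have nzz: "norm (z' - z) = s" using s by (simp add: z'_def)
          have "z' \<in> S"
          proof -
            have "norm z' \<le> norm z + s" using nzz norm_triangle_ineq2[of z' z] by linarith
            then have "norm z' \<le> R + 1" using nzR s dl by linarith
            moreover have "Re z' \<ge> lam0" by (simp add: z'_def s_def)
            moreover have "norm (z' - of_real lam0) \<ge> r/2"
            proof -
              have "norm (z - of_real lam0) \<le> norm (z' - of_real lam0) + norm (z' - z)"
                using norm_triangle_ineq[of "z' - of_real lam0" "z - z'"] by (simp add: norm_minus_commute)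
              then show ?thesis using False nzz s dl by linarith
            qed
            ultimately show ?thesis by (simp add: S_def)
          qed
          then have mz: "m \<le> norm (FF L 0 z')" by (rule m(2))
          have inT: "(\<epsilon>, z) \<in> T" "(0, z') \<in> T"
            using e e1 nzR \<open>z' \<in> S\<close> by (auto simp: T_def S_def)
          have "dist (\<epsilon>, z) (0, z') \<le> dist \<epsilon> 0 + dist z z'" by (rule dist_pair_le)
          also have "\<dots> < d2" using e e1 nzz s dl by (simp add: dist_norm norm_minus_commute)
          finally have "dist (FF L \<epsilon> z) (FF L 0 z') < m / 2" using d2(2)[rule_format, OF inT(2) inT(1)] by simp
          moreover have "FF L \<epsilon> z = 0" using z(3) by (simp add: det_Delta)
          ultimately have "norm (FF L 0 z') < m / 2" by (simp add: dist_norm)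
          then show ?thesis using mz m(1) by linarith
        qed
      qed
      then show ?thesis using bl(1) by blast
    qed
    ultimately show ?thesis by blast
  qed
  ultimately show ?thesis by blast
qed

end
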